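(* For a positive integer $k>1$ let $G_k=P_{(2k+2)^2} \times P_{(2k+1)^2}$. Then $\dim_{k,f}(G_k)=\Theta(k^2)$ as $k\to\infty$; consequently both $\frac{\dim_{1,f}(G_k)}{\dim_{k,f}(G_k)}$ and $\frac{\dim_{k,f}(G_k)}{\dim_f(G_k)}$ can be arbitrarily large (they are unbounded as $k\to\infty$).
   Context: $P_n$ is the path on $n$ vertices and $\times$ denotes the Cartesian product (grid graph). $d(x,y)$ is the distance in $G$. For a function $g$ on $V(G)$ and $U\subseteq V(G)$, $g(U)=\sum_{s\in U}g(s)$. $R\{x,y\}=\{z: d(x,z)\ne d(y,z)\}$; $g:V(G)\to[0,1]$ is a resolving function if $g(R\{x,y\})\ge1$ for all distinct $x,y$, and $\dim_f(G)$ is the minimum of $g(V(G))$ over resolving functions. For a positive integer $k$, $d_k(x,y)=\min\{d(x,y),k+1\}$, $R_k\{x,y\}=\{z: d_k(x,z)\neq d_k(y,z)\}$; $h:V(G)\to[0,1]$ is a $k$-truncated resolving function if $h(R_k\{x,y\})\ge 1$ for all distinct $x,y$, and $\dim_{k,f}(G)$ is the minimum of $h(V(G))$ over such $h$. $f=\Theta(g)$ means $c_1|g|\le|f|\le c_2|g|$ for some positive constants and all sufficiently large arguments. *)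

theory Defs
  imports Complex_Main "HOL-Library.Landau_Symbols"
begin

text \<open>A graph is given by a vertex set V and a symmetric adjacency relation E.\<close>

fun is_walk :: "('a \<Rightarrow> 'a \<Rightarrow> bool) \<Rightarrow> 'a list \<Rightarrow> bool" where
  "is_walk E [] = True"
| "is_walk E [x] = True"
| "is_walk E (x # y # xs) = (E x y \<and> is_walk E (y # xs))"

definition gdist :: "'a set \<Rightarrow> ('a \<Rightarrow> 'a \<Rightarrow> bool) \<Rightarrow> 'a \<Rightarrow> 'a \<Rightarrow> nat" where
  "gdist V E x y = (LEAST n. \<exists>xs. length xs = Suc n \<and> hd xs = x \<and> last xs = y
                                  \<and> set xs \<subseteq> V \<and> is_walk E xs)"

text \<open>The grid graph P_m \<times> P_n (Cartesian product of paths), vertices (i,j), i<m, j<n.\<close>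
definition grid_V :: "nat \<Rightarrow> nat \<Rightarrow> (nat \<times> nat) set" where
  "grid_V m n = {0..<m} \<times> {0..<n}"

definition grid_E :: "nat \<times> nat \<Rightarrow> nat \<times> nat \<Rightarrow> bool" where
  "grid_E p q = ((fst p = fst q \<and> (snd p = Suc (snd q) \<or> snd q = Suc (snd p)))
               \<or> (snd p = snd q \<and> (fst p = Suc (fst q) \<or> fst q = Suc (fst p))))"

definition resolv_set :: "'a set \<Rightarrow> ('a \<Rightarrow> 'a \<Rightarrow> nat) \<Rightarrow> 'a \<Rightarrow> 'a \<Rightarrow> 'a set" where
  "resolv_set V d x y = {z \<in> V. d x z \<noteq> d y z}"

definition resolving_fun :: "'a set \<Rightarrow> ('a \<Rightarrow> 'a \<Rightarrow> nat) \<Rightarrow> ('a \<Rightarrow> real) \<Rightarrow> bool" where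
  "resolving_fun V d g = ((\<forall>z\<in>V. 0 \<le> g z \<and> g z \<le> 1) \<and>
      (\<forall>x\<in>V. \<forall>y\<in>V. x \<noteq> y \<longrightarrow> sum g (resolv_set V d x y) \<ge> 1))"

definition frac_dim_wrt :: "'a set \<Rightarrow> ('a \<Rightarrow> 'a \<Rightarrow> nat) \<Rightarrow> real" where
  "frac_dim_wrt V d = Inf {sum g V | g. resolving_fun V d g}"

definition frac_dim :: "'a set \<Rightarrow> ('a \<Rightarrow> 'a \<Rightarrow> bool) \<Rightarrow> real" where
  "frac_dim V E = frac_dim_wrt V (gdist V E)"

definition trunc_dist :: "nat \<Rightarrow> 'a set \<Rightarrow> ('a \<Rightarrow> 'a \<Rightarrow> bool) \<Rightarrow> 'a \<Rightarrow> 'a \<Rightarrow> nat" where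
  "trunc_dist k V E x y = min (gdist V E x y) (k + 1)"

definition trunc_frac_dim :: "nat \<Rightarrow> 'a set \<Rightarrow> ('a \<Rightarrow> 'a \<Rightarrow> bool) \<Rightarrow> real" where
  "trunc_frac_dim k V E = frac_dim_wrt V (trunc_dist k V E)"

definition Gk_V :: "nat \<Rightarrow> (nat \<times> nat) set" where
  "Gk_V k = grid_V ((2*k+2)^2) ((2*k+1)^2)"

end

theory Submission imports Defs begin

definition md :: "nat \<times> nat \<Rightarrow> nat \<times> nat \<Rightarrow> nat" where
  "md p q = (fst p - fst q) + (fst q - fst p) + (snd p - snd q) + (snd q - snd p)"

lemma walk_bound:
  "is_walk grid_E xs \<Longrightarrow> xs \<noteq> [] \<Longrightarrow> md (hd xs) (last xs) \<le> length xs - 1"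
proof (induction xs rule: induct_list012)
  case 1 then show ?case by simp
next
  case (2 x) then show ?case by (simp add: md_def)
next
  case (3 x y xs)
  then have e: "grid_E x y" and ih: "md y (last (y # xs)) \<le> length (y#xs) - 1" by auto
  have "md x (last (y#xs)) \<le> md y (last (y#xs)) + 1"
    using e unfolding md_def grid_E_def by auto
  then show ?case using ih by simp
qed

lemma walk_exists:
  assumes "p \<in> grid_V M N" "q \<in> grid_V M N"
  shows "\<exists>xs. length xs = Suc (md p q) \<and> hd xs = p \<and> last xs = q
            \<and> set xs \<subseteq> grid_V M N \<and> is_walk grid_E xs"
  using assms
proof (induction "md p q" arbitrary: p)
  case 0
  then have "p = q" unfolding md_def by (simp add: prod_eq_iff)
  then show ?case using 0 by (intro exI[of _ "[p]"]) auto
next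
  case (Suc n)
  obtain i j where p: "p = (i,j)" by fastforce
  obtain u v where q: "q = (u,v)" by fastforce
  define p' where "p' = (if i < u then (Suc i, j) else if u < i then (i - 1, j)
       else if j < v then (i, Suc j) else (i, j - 1))"
  have e: "grid_E p p'" using Suc(2) unfolding p'_def p q grid_E_def md_def by auto
  have n: "n = md p' q" using Suc(2) unfolding p'_def p q md_def by auto
  have pv: "p' \<in> grid_V M N" using Suc(2,3,4) unfolding p'_def p q md_def grid_V_def by auto
  obtain xs where xs: "length xs = Suc (md p' q)" "hd xs = p'" "last xs = q"
     "set xs \<subseteq> grid_V M N" "is_walk grid_E xs"
    using Suc(1)[OF n pv Suc(4)] by blast
  then have xs': "xs = p' # tl xs" by (cases xs) auto
  have "is_walk grid_E (p # xs)" using e xs(5) xs' by (metis is_walk.simps(3))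
  then show ?case using xs xs' Suc(2,3) n
    by (intro exI[of _ "p # xs"]) (auto simp del: is_walk.simps)
qed

lemma gdist_grid:
  assumes "p \<in> grid_V M N" "q \<in> grid_V M N"
  shows "gdist (grid_V M N) grid_E p q = md p q"
  unfolding gdist_def
proof (rule Least_equality)
  show "\<exists>xs. length xs = Suc (md p q) \<and> hd xs = p \<and> last xs = q
            \<and> set xs \<subseteq> grid_V M N \<and> is_walk grid_E xs" by (rule walk_exists[OF assms])
next
  fix n assume "\<exists>xs. length xs = Suc n \<and> hd xs = p \<and> last xs = q
            \<and> set xs \<subseteq> grid_V M N \<and> is_walk grid_E xs"
  then obtain xs where "length xs = Suc n" "hd xs = p" "last xs = q" "is_walk grid_E xs" by blast
  moreover have "xs \<noteq> []" using \<open>length xs = Suc n\<close> by auto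
  ultimately show "md p q \<le> n" using walk_bound[of xs] by auto
qed

lemma corner:
  fixes i j u v a a' b b' :: nat
  assumes "a \<le> i" "i \<le> a'" "b \<le> j" "j \<le> b'"
   "md (u,v) (a,b) = md (i,j) (a,b)" "md (u,v) (a',b) = md (i,j) (a',b)"
   "md (u,v) (a,b') = md (i,j) (a,b')" "md (u,v) (a',b') = md (i,j) (a',b')"
  shows "(u,v) = (i,j)"
proof -
  have "md (u,v) (a,b) + md (u,v) (a',b') = md (i,j) (a,b) + md (i,j) (a',b')"
    using assms by simp
  also have "\<dots> = (a'-a) + (b'-b)" using assms(1-4) unfolding md_def by simp
  finally have h: "md (u,v) (a,b) + md (u,v) (a',b') = (a'-a) + (b'-b)" .
  have s1: "a' - a \<le> (u - a) + (a - u) + ((a' - u) + (u - a'))" by arith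
  have s2: "b' - b \<le> (v - b) + (b - v) + ((b' - v) + (v - b'))" by arith
  have e: "md (u,v) (a,b) + md (u,v) (a',b') =
     ((u - a) + (a - u) + ((a' - u) + (u - a'))) + ((v - b) + (b - v) + ((b' - v) + (v - b')))"
    unfolding md_def by simp
  have e1: "(u - a) + (a - u) + ((a' - u) + (u - a')) = a' - a" using h e s1 s2 by linarith
  have e2: "(v - b) + (b - v) + ((b' - v) + (v - b')) = b' - b" using h e s1 s2 by linarith
  have r1: "a \<le> u \<and> u \<le> a'" using e1 assms(1,2) by arith
  have r2: "b \<le> v \<and> v \<le> b'" using e2 assms(3,4) by arith
  have r: "a \<le> u \<and> u \<le> a' \<and> b \<le> v \<and> v \<le> b'" using r1 r2 by blast
  have "(u - a) + (v - b) = (i - a) + (j - b)" using assms(5) r assms(1-4) unfolding md_def by simp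
  moreover have "(a' - u) + (v - b) = (a' - i) + (j - b)" using assms(6) r assms(1-4) unfolding md_def by simp
  moreover have "(u - a) + (b' - v) = (i - a) + (b' - j)" using assms(7) r assms(1-4) unfolding md_def by simp
  ultimately show ?thesis using r assms(1-4) by auto
qed


lemma md_corners:
  assumes "a \<le> i" "i \<le> a'" "b \<le> j" "j \<le> b'" "s \<in> {(a,b),(a',b),(a,b'),(a',b')}"
  shows "md (i,j) s \<le> (a'-a)+(b'-b)"
proof -
  have "md (i,j) (a,b) = (i-a)+(j-b)" "md (i,j) (a',b) = (a'-i)+(j-b)"
       "md (i,j) (a,b') = (i-a)+(b'-j)" "md (i,j) (a',b') = (a'-i)+(b'-j)"
    using assms(1-4) unfolding md_def by simp_all
  then show ?thesis using assms by auto
qed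

lemma md_two:
  assumes "i < M" "u < M" "md (i,j) (0,0) = md (u,v) (0,0)" "md (i,j) (M-1,0) = md (u,v) (M-1,0)"
  shows "(i,j) = (u,v)"
proof -
  have "md (i,j) (0,0) = i+j" "md (u,v) (0,0) = u+v" unfolding md_def by simp_all
  moreover have "md (i,j) (M-1,0) = (M-1-i)+j" "md (u,v) (M-1,0) = (M-1-u)+v"
    using assms(1,2) unfolding md_def by simp_all
  ultimately show ?thesis using assms by auto
qed

lemma fd_le:
  assumes "resolving_fun V d g"
  shows "frac_dim_wrt V d \<le> sum g V"
  unfolding frac_dim_wrt_def
proof (rule cInf_lower)
  show "sum g V \<in> {sum g V |g. resolving_fun V d g}" using assms by blast
  show "bdd_below {sum g V |g. resolving_fun V d g}"
    by (rule bdd_belowI[of _ 0]) (auto simp: resolving_fun_def intro: sum_nonneg)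
qed

lemma fd_ge:
  assumes "resolving_fun V d g0" "\<And>g. resolving_fun V d g \<Longrightarrow> c \<le> sum g V"
  shows "c \<le> frac_dim_wrt V d"
  unfolding frac_dim_wrt_def
  by (rule cInf_greatest) (use assms in auto)

lemma sum_ge_sub:
  assumes "finite V" "U \<subseteq> V" "\<forall>z\<in>V. 0 \<le> g z \<and> g z \<le> (1::real)"
  shows "sum g U \<le> sum g V"
  by (rule sum_mono2) (use assms in auto)

lemma finite_grid: "finite (grid_V M N)" unfolding grid_V_def by simp

lemma trunc_grid:
  assumes "p \<in> grid_V M N" "q \<in> grid_V M N"
  shows "trunc_dist t (grid_V M N) grid_E p q = min (md p q) (t+1)"
  unfolding trunc_dist_def using gdist_grid[OF assms] by simp

lemma mult_gap:
  fixes a a' s :: nat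
  assumes "a < a'"
  shows "a * s + s \<le> a' * s"
proof -
  have "Suc a \<le> a'" using assms by simp
  then have "Suc a * s \<le> a' * s" by (rule mult_le_mono1)
  then show ?thesis by simp
qed

lemma lower:
  assumes res: "resolving_fun (grid_V M N) (trunc_dist t (grid_V M N) grid_E) g"
    and hA: "(A-1)*(2*t+3)+1 < M" and hB: "(B-1)*(2*t+3) < N"
  shows "real (A*B) \<le> sum g (grid_V M N)"
proof -
  let ?V = "grid_V M N"
  let ?s = "2*t+3"
  define c where "c = (\<lambda>(a::nat,b::nat). (a*?s, b*?s))"
  define c' where "c' = (\<lambda>(a::nat,b::nat). (a*?s+1, b*?s))"
  define D where "D = (\<lambda>ab. {z \<in> ?V. md (c ab) z \<le> t \<or> md (c' ab) z \<le> t})"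
  let ?I = "{..<A} \<times> {..<B}"
  have g01: "\<forall>z\<in>?V. 0 \<le> g z \<and> g z \<le> 1" using res unfolding resolving_fun_def by blast
  have one: "1 \<le> sum g (D ab)" if "ab \<in> ?I" for ab
  proof -
    obtain a b where ab: "ab = (a,b)" by fastforce
    have aA: "a < A" "b < B" using that ab by auto
    have "a * ?s \<le> (A-1) * ?s" using aA by (intro mult_le_mono1) simp
    moreover have "b * ?s \<le> (B-1) * ?s" using aA by (intro mult_le_mono1) simp
    ultimately have "a*?s < M" "Suc (a*?s) < M" "b*?s < N" using hA hB by linarith+
    then have cv: "c ab \<in> ?V" "c' ab \<in> ?V"
      unfolding c_def c'_def ab grid_V_def by auto
    have ne: "c ab \<noteq> c' ab" unfolding c_def c'_def ab by simp
    have sub: "resolv_set ?V (trunc_dist t ?V grid_E) (c ab) (c' ab) \<subseteq> D ab"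
    proof
      fix z assume z: "z \<in> resolv_set ?V (trunc_dist t ?V grid_E) (c ab) (c' ab)"
      then have zv: "z \<in> ?V" unfolding resolv_set_def by auto
      have "min (md (c ab) z) (t+1) \<noteq> min (md (c' ab) z) (t+1)"
        using z trunc_grid[OF cv(1) zv] trunc_grid[OF cv(2) zv] unfolding resolv_set_def by auto
      then show "z \<in> D ab" unfolding D_def using zv by auto
    qed
    have "1 \<le> sum g (resolv_set ?V (trunc_dist t ?V grid_E) (c ab) (c' ab))"
      using res cv ne unfolding resolving_fun_def by blast
    also have "\<dots> \<le> sum g (D ab)"
      by (rule sum_mono2) (use sub g01 finite_grid[of M N] in \<open>auto simp: D_def\<close>)
    finally show ?thesis .
  qed
  have disj: "D x \<inter> D y = {}" if "x \<in> ?I" "y \<in> ?I" "x \<noteq> y" for x y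
  proof -
    obtain a b where x: "x = (a,b)" by fastforce
    obtain a' b' where y: "y = (a',b')" by fastforce
    show ?thesis
    proof (rule ccontr)
      assume "D x \<inter> D y \<noteq> {}"
      then obtain z where z: "z \<in> D x" "z \<in> D y" by blast
      obtain p q where zz: "z = (p,q)" by fastforce
      have dx: "p \<le> a*?s + 1 + t \<and> a*?s \<le> p + t \<and> q \<le> b*?s + t \<and> b*?s \<le> q + t"
        using z(1) unfolding D_def c_def c'_def x zz md_def by auto
      have dy: "p \<le> a'*?s + 1 + t \<and> a'*?s \<le> p + t \<and> q \<le> b'*?s + t \<and> b'*?s \<le> q + t"
        using z(2) unfolding D_def c_def c'_def y zz md_def by auto
      have "a \<noteq> a' \<or> b \<noteq> b'" using that x y by auto
      then consider "a < a'" | "a' < a" | "b < b'" | "b' < b" by linarith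
      then show False
      proof cases
        case 1 then have "a*?s + ?s \<le> a'*?s" by (rule mult_gap)
        then show False using dx dy by linarith
      next
        case 2 then have "a'*?s + ?s \<le> a*?s" by (rule mult_gap)
        then show False using dx dy by linarith
      next
        case 3 then have "b*?s + ?s \<le> b'*?s" by (rule mult_gap)
        then show False using dx dy by linarith
      next
        case 4 then have "b'*?s + ?s \<le> b*?s" by (rule mult_gap)
        then show False using dx dy by linarith
      qed
    qed
  qed
  have "real (A*B) = (\<Sum>ab\<in>?I. (1::real))" by simp
  also have "\<dots> \<le> (\<Sum>ab\<in>?I. sum g (D ab))" by (rule sum_mono) (rule one)
  also have "\<dots> = sum g (\<Union>ab\<in>?I. D ab)"
    by (rule sum.UNION_disjoint[symmetric]) (use disj in \<open>auto simp: D_def finite_grid\<close>)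
  also have "\<dots> \<le> sum g ?V"
    by (rule sum_mono2) (use g01 in \<open>auto simp: D_def finite_grid\<close>)
  finally show ?thesis .
qed


definition LL :: "nat \<Rightarrow> nat \<Rightarrow> nat set" where
  "LL M h = {x. \<exists>t. x = t*h \<and> x < M} \<union> {M-1}"

lemma LL_sub: "1 \<le> M \<Longrightarrow> x \<in> LL M h \<Longrightarrow> x < M"
  unfolding LL_def by auto

lemma LL_cover:
  assumes "1 \<le> h" "i < M"
  shows "\<exists>a\<in>LL M h. \<exists>a'\<in>LL M h. a \<le> i \<and> i \<le> a' \<and> a' \<le> a + h"
proof -
  define a where "a = (i div h) * h"
  have a1: "a \<le> i" unfolding a_def by (simp add: div_times_less_eq_dividend)
  have a2: "i < a + h" unfolding a_def using assms(1)
    by (metis add.commute div_mult_mod_eq mod_less_divisor le_simps(3) nat_add_left_cancel_less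
        less_le_trans zero_less_one)
  have "a < M" using a1 assms(2) by simp
  then have aL: "a \<in> LL M h" unfolding LL_def using a_def by blast
  show ?thesis
  proof (cases "a + h < M")
    case True
    have "a + h = (i div h + 1) * h" unfolding a_def by simp
    then have "a + h \<in> LL M h" unfolding LL_def using True by blast
    then show ?thesis using aL a1 a2 by (intro bexI[of _ a] bexI[of _ "a+h"]) auto
  next
    case False
    have "M - 1 \<in> LL M h" unfolding LL_def by blast
    then show ?thesis using aL a1 a2 False assms(2) by (intro bexI[of _ a] bexI[of _ "M-1"]) auto
  qed
qed

lemma LL_card:
  assumes "1 \<le> h"
  shows "finite (LL M h) \<and> card (LL M h) \<le> (M-1) div h + 2"
proof -
  have sub: "{x. \<exists>t. x = t*h \<and> x < M} \<subseteq> (\<lambda>t. t*h) ` {..(M-1) div h}"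
  proof
    fix x assume "x \<in> {x. \<exists>t. x = t*h \<and> x < M}"
    then obtain t where t: "x = t*h" "t*h < M" by blast
    then have "t \<le> (M-1) div h" using assms by (simp add: less_eq_div_iff_mult_less_eq)
    then show "x \<in> (\<lambda>t. t*h) ` {..(M-1) div h}" using t by blast
  qed
  have f: "finite {x. \<exists>t. x = t*h \<and> x < M}" by (rule finite_subset[OF sub]) simp
  have "card {x. \<exists>t. x = t*h \<and> x < M} \<le> card ((\<lambda>t. t*h) ` {..(M-1) div h})"
    by (rule card_mono[OF _ sub]) simp
  also have "\<dots> \<le> card {..(M-1) div h}" by (rule card_image_le) simp
  finally have c: "card {x. \<exists>t. x = t*h \<and> x < M} \<le> (M-1) div h + 1" by simp
  have "card (LL M h) \<le> card {x. \<exists>t. x = t*h \<and> x < M} + card {M-1}"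
    unfolding LL_def by (rule card_Un_le)
  then show ?thesis using c f unfolding LL_def by simp
qed

lemma upper:
  assumes "1 \<le> M" "1 \<le> N" "1 \<le> h" "2*h \<le> k"
  defines "S \<equiv> LL M h \<times> LL N h"
  shows "resolving_fun (grid_V M N) (trunc_dist k (grid_V M N) grid_E) (\<lambda>z. if z \<in> S then 1 else 0)"
    and "sum (\<lambda>z. if z \<in> S then 1 else 0) (grid_V M N) = real (card S)"
proof -
  let ?V = "grid_V M N"
  let ?g = "\<lambda>z. if z \<in> S then 1 else (0::real)"
  have SV: "S \<subseteq> ?V" unfolding S_def grid_V_def using LL_sub assms(1,2) by auto
  have fS: "finite S" unfolding S_def using LL_card assms(3) by auto
  show "sum ?g ?V = real (card S)"
  proof -
    have "sum ?g ?V = sum ?g (?V - S) + sum ?g S"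
      by (rule sum.subset_diff[OF SV finite_grid])
    also have "sum ?g (?V - S) = 0" by simp
    finally show ?thesis by simp
  qed
  show "resolving_fun ?V (trunc_dist k ?V grid_E) ?g"
    unfolding resolving_fun_def
  proof (intro conjI ballI impI)
    fix z show "0 \<le> ?g z" "?g z \<le> 1" by auto
  next
    fix x y assume xv: "x \<in> ?V" and yv: "y \<in> ?V" and xy: "x \<noteq> y"
    obtain i j where x: "x = (i,j)" by fastforce
    obtain u v where y: "y = (u,v)" by fastforce
    have ij: "i < M" "j < N" using xv unfolding x grid_V_def by auto
    obtain a a' where aa: "a \<in> LL M h" "a' \<in> LL M h" "a \<le> i" "i \<le> a'" "a' \<le> a + h"
      using LL_cover[OF assms(3) ij(1)] by blast
    obtain b b' where bb: "b \<in> LL N h" "b' \<in> LL N h" "b \<le> j" "j \<le> b'" "b' \<le> b + h"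
      using LL_cover[OF assms(3) ij(2)] by blast
    let ?R = "resolv_set ?V (trunc_dist k ?V grid_E) x y"
    have "\<exists>s\<in>S. s \<in> ?R"
    proof (rule ccontr)
      assume "\<not> (\<exists>s\<in>S. s \<in> ?R)"
      then have eq: "md y s = md x s" if "s \<in> {(a,b),(a',b),(a,b'),(a',b')}" for s
      proof -
        have sS: "s \<in> S" using that aa bb unfolding S_def by auto
        then have sv: "s \<in> ?V" using SV by auto
        have "s \<notin> ?R" using sS \<open>\<not> (\<exists>s\<in>S. s \<in> ?R)\<close> by blast
        then have "min (md x s) (k+1) = min (md y s) (k+1)"
          using sv trunc_grid[OF xv sv] trunc_grid[OF yv sv] unfolding resolv_set_def by auto
        moreover have "md x s \<le> k" using md_corners[OF aa(3,4) bb(3,4) that] aa(5) bb(5) assms(4)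
          unfolding x by linarith
        ultimately show ?thesis by linarith
      qed
      have "(u,v) = (i,j)"
        by (rule corner[OF aa(3,4) bb(3,4)]) (use eq in \<open>auto simp: x y\<close>)
      then show False using xy x y by simp
    qed
    then obtain s where s: "s \<in> S" "s \<in> ?R" by blast
    have "1 = sum ?g {s}" using s by simp
    also have "\<dots> \<le> sum ?g ?R"
      by (rule sum_mono2) (use s in \<open>auto simp: resolv_set_def finite_grid\<close>)
    finally show "1 \<le> sum ?g ?R" .
  qed
qed

lemma frac_upper:
  assumes "1 \<le> M" "1 \<le> N"
  shows "resolving_fun (grid_V M N) (gdist (grid_V M N) grid_E) (\<lambda>z. if z \<in> {(0,0),(M-1,0)} then 1 else 0)"
    and "sum (\<lambda>z. if z \<in> {(0,0),(M-1,0)} then 1 else (0::real)) (grid_V M N) \<le> 2"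
proof -
  let ?S = "{(0::nat,0::nat),(M-1,0)}"
  let ?V = "grid_V M N"
  let ?g = "\<lambda>z. if z \<in> ?S then 1 else (0::real)"
  have SV: "?S \<subseteq> ?V" unfolding grid_V_def using assms by auto
  have "sum ?g ?V = sum ?g (?V - ?S) + sum ?g ?S"
    by (rule sum.subset_diff[OF SV finite_grid])
  also have "sum ?g (?V - ?S) = 0" by simp
  also have "sum ?g ?S = real (card ?S)" by simp
  also have "card ?S \<le> 2" by (rule card_insert_le_m1) auto
  finally show "sum ?g ?V \<le> 2" by simp
  show "resolving_fun ?V (gdist ?V grid_E) ?g"
    unfolding resolving_fun_def
  proof (intro conjI ballI impI)
    fix z show "0 \<le> ?g z" "?g z \<le> 1" by auto
  next
    fix x y assume xv: "x \<in> ?V" and yv: "y \<in> ?V" and xy: "x \<noteq> y"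
    let ?R = "resolv_set ?V (gdist ?V grid_E) x y"
    have "\<exists>s\<in>?S. s \<in> ?R"
    proof (rule ccontr)
      assume "\<not> (\<exists>s\<in>?S. s \<in> ?R)"
      then have "md x s = md y s" if "s \<in> ?S" for s
        using that SV gdist_grid[OF xv, of s] gdist_grid[OF yv, of s]
        unfolding resolv_set_def by auto
      then have "md x (0,0) = md y (0,0)" "md x (M-1,0) = md y (M-1,0)" by auto
      moreover have "fst x < M" "fst y < M" using xv yv unfolding grid_V_def by auto
      ultimately have "x = y" using md_two[of "fst x" M "fst y" "snd x" "snd y"] by simp
      then show False using xy by simp
    qed
    then obtain s where s: "s \<in> ?S" "s \<in> ?R" by blast
    have "1 = sum ?g {s}" using s by simp
    also have "\<dots> \<le> sum ?g ?R"
      by (rule sum_mono2) (use s in \<open>auto simp: resolv_set_def finite_grid\<close>)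
    finally show "1 \<le> sum ?g ?R" .
  qed
qed

lemma frac_lower:
  assumes "resolving_fun (grid_V M N) d g" "2 \<le> M" "1 \<le> N"
  shows "1 \<le> sum g (grid_V M N)"
proof -
  have v: "(0,0) \<in> grid_V M N" "(1,0) \<in> grid_V M N" using assms unfolding grid_V_def by auto
  then have "1 \<le> sum g (resolv_set (grid_V M N) d (0,0) (1,0))"
    using assms(1) unfolding resolving_fun_def by auto
  also have "\<dots> \<le> sum g (grid_V M N)"
    by (rule sum_mono2) (use assms(1) in \<open>auto simp: resolv_set_def finite_grid resolving_fun_def\<close>)
  finally show ?thesis .
qed


lemma ones_res:
  "resolving_fun (grid_V M N) (trunc_dist t (grid_V M N) grid_E) (\<lambda>_. 1)"
  unfolding resolving_fun_def
proof (intro conjI ballI impI)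
  fix x y assume xv: "x \<in> grid_V M N" and yv: "y \<in> grid_V M N" and xy: "x \<noteq> y"
  have "md x x = 0" unfolding md_def by simp
  moreover have "md y x \<noteq> 0" using xy unfolding md_def by (auto simp: prod_eq_iff)
  ultimately have "x \<in> resolv_set (grid_V M N) (trunc_dist t (grid_V M N) grid_E) x y"
    unfolding resolv_set_def using trunc_grid[OF xv xv] trunc_grid[OF yv xv] xv by auto
  moreover have "finite (resolv_set (grid_V M N) (trunc_dist t (grid_V M N) grid_E) x y)"
    by (rule finite_subset[OF _ finite_grid]) (auto simp: resolv_set_def)
  ultimately have "1 \<le> card (resolv_set (grid_V M N) (trunc_dist t (grid_V M N) grid_E) x y)"
    by (simp add: Suc_le_eq card_gt_0_iff) blast
  then show "1 \<le> (\<Sum>z\<in>resolv_set (grid_V M N) (trunc_dist t (grid_V M N) grid_E) x y. (1::real))"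
    by simp
qed auto

lemma TL:
  assumes "(A-1)*(2*t+3)+1 < M" "(A-1)*(2*t+3) < N"
  shows "real (A*A) \<le> trunc_frac_dim t (grid_V M N) grid_E"
  unfolding trunc_frac_dim_def
  by (rule fd_ge[OF ones_res]) (rule lower[OF _ assms])

lemma TLk:
  assumes "1 \<le> k"
  shows "real k ^ 2 \<le> trunc_frac_dim k (Gk_V k) grid_E"
proof -
  have a: "(k-1)*(2*k+3) \<le> k*(2*k+3)" by simp
  have b: "k*(2*k+3) + 1 < (2*k+1)^2" "(2*k+1)^2 < (2*k+2)^2"
    using assms by (simp_all add: power2_eq_square algebra_simps)
  have "real (k*k) \<le> trunc_frac_dim k (Gk_V k) grid_E"
    unfolding Gk_V_def by (rule TL) (use a b in linarith)+
  then show ?thesis by (simp add: power2_eq_square)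
qed

lemma qbound:
  fixes k h P :: nat
  assumes "2 \<le> k" "h = k div 2" "P \<le> 4*k*k + 8*k + 3"
  shows "P div h + 2 \<le> 36*k"
proof -
  have h1: "1 \<le> h" using assms by simp
  have kh: "k \<le> 4*h" using assms by simp
  let ?q = "P div h"
  have "?q * h \<le> P" by (rule div_times_less_eq_dividend)
  have "?q * k \<le> ?q * (4*h)" using kh by (rule mult_le_mono2)
  also have "\<dots> = 4 * (?q * h)" by simp
  also have "\<dots> \<le> 4 * P" using \<open>?q * h \<le> P\<close> by simp
  also have "\<dots> \<le> (16*k+38)*k" using assms(1,3) by (simp add: algebra_simps)
  finally have "?q \<le> 16*k+38" using assms(1) by simp
  then show ?thesis using assms(1) by simp
qed

lemma TUk:
  assumes "2 \<le> k"
  shows "trunc_frac_dim k (Gk_V k) grid_E \<le> 1296 * real k ^ 2"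
proof -
  define h where "h = k div 2"
  define M where "M = (2*k+2)^2"
  define N where "N = (2*k+1)^2"
  have h1: "1 \<le> h" "2*h \<le> k" using assms unfolding h_def by auto
  have MN: "1 \<le> M" "1 \<le> N" unfolding M_def N_def by simp_all
  let ?S = "LL M h \<times> LL N h"
  have "trunc_frac_dim k (Gk_V k) grid_E \<le> sum (\<lambda>z. if z \<in> ?S then 1 else 0) (grid_V M N)"
    unfolding trunc_frac_dim_def Gk_V_def M_def[symmetric] N_def[symmetric]
    by (rule fd_le[OF upper(1)[OF MN h1]])
  also have "\<dots> = real (card ?S)" by (rule upper(2)[OF MN h1])
  also have "card ?S = card (LL M h) * card (LL N h)" by (rule card_cartesian_product)
  also have "\<dots> \<le> (36*k) * (36*k)"
  proof (rule mult_le_mono)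
    have "M - 1 \<le> 4*k*k + 8*k + 3" unfolding M_def by (simp add: power2_eq_square algebra_simps)
    then show "card (LL M h) \<le> 36*k" using LL_card[OF h1(1), of M] qbound[OF assms h_def] by fastforce
    have "N - 1 \<le> 4*k*k + 8*k + 3" unfolding N_def by (simp add: power2_eq_square algebra_simps)
    then show "card (LL N h) \<le> 36*k" using LL_card[OF h1(1), of N] qbound[OF assms h_def] by fastforce
  qed
  finally show ?thesis by (simp add: power2_eq_square)
qed

lemma FD:
  assumes "1 \<le> k"
  shows "1 \<le> frac_dim (Gk_V k) grid_E" "frac_dim (Gk_V k) grid_E \<le> 2"
proof -
  define M where "M = (2*k+2)^2"
  define N where "N = (2*k+1)^2"
  have MN: "1 \<le> M" "1 \<le> N" "2 \<le> M" unfolding M_def N_def by (simp_all add: power2_eq_square)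
  show "1 \<le> frac_dim (Gk_V k) grid_E"
    unfolding frac_dim_def Gk_V_def M_def[symmetric] N_def[symmetric]
    by (rule fd_ge[OF frac_upper(1)[OF MN(1,2)]]) (rule frac_lower[OF _ MN(3,2)])
  show "frac_dim (Gk_V k) grid_E \<le> 2"
    unfolding frac_dim_def Gk_V_def M_def[symmetric] N_def[symmetric]
    using fd_le[OF frac_upper(1)[OF MN(1,2)]] frac_upper(2)[OF MN(1,2)] by linarith
qed


theorem theorem3p9:
  shows "(\<lambda>k. trunc_frac_dim k (Gk_V k) grid_E) \<in> \<Theta>(\<lambda>k. real k ^ 2)
    \<and> (\<forall>B::real. \<exists>k>1. trunc_frac_dim 1 (Gk_V k) grid_E / trunc_frac_dim k (Gk_V k) grid_E > B)
    \<and> (\<forall>B::real. \<exists>k>1. trunc_frac_dim k (Gk_V k) grid_E / frac_dim (Gk_V k) grid_E > B)"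
proof (intro conjI allI)
  show "(\<lambda>k. trunc_frac_dim k (Gk_V k) grid_E) \<in> \<Theta>(\<lambda>k. real k ^ 2)"
  proof (rule bigthetaI'[of 1 1296])
    show "\<forall>\<^sub>F k in at_top. 1 * norm (real k ^ 2) \<le> norm (trunc_frac_dim k (Gk_V k) grid_E) \<and>
        norm (trunc_frac_dim k (Gk_V k) grid_E) \<le> 1296 * norm (real k ^ 2)"
    proof (rule eventually_at_top_linorderI[of 2])
      fix k :: nat assume k: "2 \<le> k"
      have l: "real k ^ 2 \<le> trunc_frac_dim k (Gk_V k) grid_E" using TLk k by simp
      have u: "trunc_frac_dim k (Gk_V k) grid_E \<le> 1296 * real k ^ 2" using TUk k by simp
      have "0 \<le> real k ^ 2" by simp
      then show "1 * norm (real k ^ 2) \<le> norm (trunc_frac_dim k (Gk_V k) grid_E) \<and>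
        norm (trunc_frac_dim k (Gk_V k) grid_E) \<le> 1296 * norm (real k ^ 2)"
        using l u by simp
    qed
  qed simp_all
next
  fix B :: real
  define n :: nat where "n = nat \<lceil>\<bar>B\<bar>\<rceil> + 1"
  define m :: nat where "m = 1296 * n"
  define k :: nat where "k = 2 * m"
  define A :: nat where "A = 2 * m * m"
  have n1: "1 \<le> n" unfolding n_def by simp
  have m1: "1 \<le> m" unfolding m_def using n1 by simp
  have k2: "2 \<le> k" unfolding k_def using m1 by simp
  have Bn: "B < real n" unfolding n_def by linarith
  have c1: "A * 5 + 1 < (2*k+1)^2" unfolding A_def k_def using m1
    by (simp add: power2_eq_square algebra_simps)
  have c2: "(2*k+1)^2 < (2*k+2)^2" by (simp add: power2_eq_square)
  have c0: "(A-1)*(2*1+3) \<le> A*5" by simp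
  have "real (A*A) \<le> trunc_frac_dim 1 (Gk_V k) grid_E"
    unfolding Gk_V_def by (rule TL) (use c0 c1 c2 in linarith)+
  moreover have "real (A*A) = 4 * real m ^ 4" unfolding A_def by (simp add: power4_eq_xxxx)
  ultimately have t1: "4 * real m ^ 4 \<le> trunc_frac_dim 1 (Gk_V k) grid_E" by simp
  have tk: "trunc_frac_dim k (Gk_V k) grid_E \<le> 5184 * real m ^ 2"
    using TUk[OF k2] unfolding k_def by (simp add: power2_eq_square)
  have tk0: "0 < trunc_frac_dim k (Gk_V k) grid_E"
  proof -
    have "0 < real k ^ 2" using k2 by simp
    moreover have "real k ^ 2 \<le> trunc_frac_dim k (Gk_V k) grid_E" using TLk[of k] k2 by simp
    ultimately show ?thesis by linarith
  qed
  have "4 * real m ^ 4 / (5184 * real m ^ 2) \<le>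
      trunc_frac_dim 1 (Gk_V k) grid_E / trunc_frac_dim k (Gk_V k) grid_E"
  proof (rule frac_le)
    have "0 \<le> 4 * real m ^ 4" by simp
    then show "0 \<le> trunc_frac_dim 1 (Gk_V k) grid_E" using t1 by linarith
  qed (use t1 tk tk0 in auto)
  moreover have "4 * real m ^ 4 / (5184 * real m ^ 2) = real m ^ 2 / 1296"
    using m1 by (simp add: field_simps power2_eq_square power4_eq_xxxx)
  moreover have "real m ^ 2 / 1296 = 1296 * real n ^ 2"
    unfolding m_def by (simp add: power2_eq_square)
  moreover have "real n \<le> 1296 * real n ^ 2" using n1 by (simp add: power2_eq_square)
  ultimately show "\<exists>k>1. trunc_frac_dim 1 (Gk_V k) grid_E / trunc_frac_dim k (Gk_V k) grid_E > B"
    using Bn k2 by (intro exI[of _ k]) auto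
next
  fix B :: real
  define k :: nat where "k = nat \<lceil>\<bar>B\<bar>\<rceil> + 2"
  have k2: "2 \<le> k" unfolding k_def by simp
  have Bk: "B < real k" unfolding k_def by linarith
  have l: "real k ^ 2 \<le> trunc_frac_dim k (Gk_V k) grid_E" using TLk k2 by simp
  have f1: "1 \<le> frac_dim (Gk_V k) grid_E" and f2: "frac_dim (Gk_V k) grid_E \<le> 2" using FD k2 by auto
  have "trunc_frac_dim k (Gk_V k) grid_E / 2 \<le> trunc_frac_dim k (Gk_V k) grid_E / frac_dim (Gk_V k) grid_E"
    by (rule frac_le) (use l f1 f2 in \<open>auto intro: order_trans[OF zero_le_power2]\<close>)
  moreover have "real k \<le> real k ^ 2 / 2" using k2 by (simp add: power2_eq_square)
  ultimately have "B < trunc_frac_dim k (Gk_V k) grid_E / frac_dim (Gk_V k) grid_E"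
    using Bk l by linarith
  moreover have "1 < k" using k2 by simp
  ultimately show "\<exists>k>1. trunc_frac_dim k (Gk_V k) grid_E / frac_dim (Gk_V k) grid_E > B"
    by blast
qed

end
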